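(* Let $X$ be a shift space which is eventually dendric with threshold $m$. Then $\rho_X(U)$ is finite for every suffix code $U\subseteq\mathcal L(X)$. Moreover, if $U$ is a finite $X$-maximal suffix code with $U\subseteq\mathcal L_{\ge m}(X)$, then $\rho_X(U)=\rho_X(\mathcal L_m(X))$.
   Context: $A$ is a finite alphabet; a shift space is a closed shift-invariant subset $X\subseteq A^{\mathbb Z}$; $\mathcal L(X)$ is its set of finite factors (including the empty word), $\mathcal L_n(X)=\mathcal L(X)\cap A^n$, $\mathcal L_{\ge n}(X)=\bigcup_{k\ge n}\mathcal L_k(X)$. For $w\in\mathcal L(X)$, the extension graph $\mathcal E_1(w)$ is the undirected bipartite graph with vertex set the disjoint union of $\{a\in A: aw\in\mathcal L(X)\}$ and $R_1(w)=\{b\in A: wb\in\mathcal L(X)\}$, with an edge $(a,b)$ iff $awb\in\mathcal L(X)$; $X$ is eventually dendric with threshold $m$ if $\mathcal E_1(w)$ is a tree for every $w\in\mathcal L_{\ge m}(X)$. Set $\rho_X(w)=\mathrm{Card}\,R_1(w)-1$ and $\rho_X(W)=\sum_{w\in W}\rho_X(w)$ for $W\subseteq\mathcal L(X)$. A suffix code is a set of words none of which is a proper suffix of another; a suffix code $U\subseteq\mathcal L(X)$ is $X$-maximal if it is not properly contained in a suffix code $V\subseteq\mathcal L(X)$. *)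

theory Defs
  imports Main "HOL-Library.Sublist"
begin

definition shift_map :: "(int \<Rightarrow> 'a) \<Rightarrow> (int \<Rightarrow> 'a)" where
  "shift_map x = (\<lambda>i. x (i + 1))"

text \<open>Closedness in the product (Tychonoff) topology of A^Z with A discrete:
  every point all of whose central cylinders meet X lies in X.\<close>
definition closed_seqs :: "(int \<Rightarrow> 'a) set \<Rightarrow> bool" where
  "closed_seqs X \<longleftrightarrow>
     (\<forall>x. (\<forall>n::nat. \<exists>y\<in>X. \<forall>i. \<bar>i\<bar> \<le> int n \<longrightarrow> y i = x i) \<longrightarrow> x \<in> X)"

definition shift_space :: "'a set \<Rightarrow> (int \<Rightarrow> 'a) set \<Rightarrow> bool" where
  "shift_space A X \<longleftrightarrow> finite A \<and> X \<subseteq> {x. \<forall>i. x i \<in> A}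
     \<and> closed_seqs X \<and> shift_map ` X = X"

definition lang :: "(int \<Rightarrow> 'a) set \<Rightarrow> 'a list set" where
  "lang X = {w. \<exists>x\<in>X. \<exists>i::int. w = map (\<lambda>k. x (i + int k)) [0..<length w]}"

definition lang_n :: "(int \<Rightarrow> 'a) set \<Rightarrow> nat \<Rightarrow> 'a list set" where
  "lang_n X n = {w \<in> lang X. length w = n}"

definition lang_ge :: "(int \<Rightarrow> 'a) set \<Rightarrow> nat \<Rightarrow> 'a list set" where
  "lang_ge X n = {w \<in> lang X. n \<le> length w}"

definition left_ext :: "(int \<Rightarrow> 'a) set \<Rightarrow> 'a list \<Rightarrow> 'a set" where
  "left_ext X w = {a. a # w \<in> lang X}"

definition right_ext :: "(int \<Rightarrow> 'a) set \<Rightarrow> 'a list \<Rightarrow> 'a set" where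
  "right_ext X w = {b. w @ [b] \<in> lang X}"

definition ug_connected :: "'v set \<Rightarrow> ('v \<Rightarrow> 'v \<Rightarrow> bool) \<Rightarrow> bool" where
  "ug_connected V E \<longleftrightarrow> V \<noteq> {} \<and>
     (\<forall>u\<in>V. \<forall>v\<in>V. (u, v) \<in> {(p, q). p \<in> V \<and> q \<in> V \<and> E p q}\<^sup>*)"

definition ug_has_cycle :: "'v set \<Rightarrow> ('v \<Rightarrow> 'v \<Rightarrow> bool) \<Rightarrow> bool" where
  "ug_has_cycle V E \<longleftrightarrow> (\<exists>vs. 3 \<le> length vs \<and> distinct vs \<and> set vs \<subseteq> V
     \<and> (\<forall>i. Suc i < length vs \<longrightarrow> E (vs ! i) (vs ! Suc i))
     \<and> E (last vs) (hd vs))"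

definition ug_tree :: "'v set \<Rightarrow> ('v \<Rightarrow> 'v \<Rightarrow> bool) \<Rightarrow> bool" where
  "ug_tree V E \<longleftrightarrow> ug_connected V E \<and> \<not> ug_has_cycle V E"

text \<open>Extension graph E_1(w): left vertices Inl a, right vertices Inr b,
  undirected edge between Inl a and Inr b iff a w b is in the language.\<close>
definition ext_vertices :: "(int \<Rightarrow> 'a) set \<Rightarrow> 'a list \<Rightarrow> ('a + 'a) set" where
  "ext_vertices X w = Inl ` left_ext X w \<union> Inr ` right_ext X w"

definition ext_adj :: "(int \<Rightarrow> 'a) set \<Rightarrow> 'a list \<Rightarrow> ('a + 'a) \<Rightarrow> ('a + 'a) \<Rightarrow> bool" where
  "ext_adj X w u v \<longleftrightarrow>
     (\<exists>a b. ((u = Inl a \<and> v = Inr b) \<or> (u = Inr b \<and> v = Inl a)) \<and> a # w @ [b] \<in> lang X)"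

definition eventually_dendric :: "(int \<Rightarrow> 'a) set \<Rightarrow> nat \<Rightarrow> bool" where
  "eventually_dendric X m \<longleftrightarrow>
     (\<forall>w \<in> lang_ge X m. ug_tree (ext_vertices X w) (ext_adj X w))"

definition rho :: "(int \<Rightarrow> 'a) set \<Rightarrow> 'a list \<Rightarrow> int" where
  "rho X w = int (card (right_ext X w)) - 1"

definition suffix_code :: "'a list set \<Rightarrow> bool" where
  "suffix_code U \<longleftrightarrow> (\<forall>u\<in>U. \<forall>v\<in>U. \<not> strict_suffix u v)"

definition X_maximal_suffix_code :: "(int \<Rightarrow> 'a) set \<Rightarrow> 'a list set \<Rightarrow> bool" where
  "X_maximal_suffix_code X U \<longleftrightarrow> suffix_code U \<and> U \<subseteq> lang X \<and>
     \<not> (\<exists>V. suffix_code V \<and> V \<subseteq> lang X \<and> U \<subset> V)"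

end

theory Submission
  imports Defs
begin


lemma tree_leaf:
  assumes fin: "finite V" and sym: "\<And>u v. E u v \<Longrightarrow> E v u" and irr: "\<And>u. \<not> E u u"
    and nc: "\<not> ug_has_cycle V E" and uv: "u \<in> V" "v \<in> V" "E u v"
  shows "\<exists>l\<in>V. \<exists>p\<in>V. E l p \<and> (\<forall>q\<in>V. E l q \<longrightarrow> q = p)"
proof -
  define P where "P vs \<longleftrightarrow> distinct vs \<and> set vs \<subseteq> V \<and> (\<forall>i. Suc i < length vs \<longrightarrow> E (vs!i) (vs!Suc i))" for vs
  have P2: "P [u,v]" using uv irr unfolding P_def by (auto simp: nth_Cons split: nat.splits)
  have bnd: "\<forall>y. (\<exists>vs. P vs \<and> length vs = y) \<longrightarrow> y \<le> card V"
    using fin unfolding P_def by (metis card_mono distinct_card)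
  obtain n where n: "\<exists>vs. P vs \<and> length vs = n" and nmax: "\<forall>y. (\<exists>vs. P vs \<and> length vs = y) \<longrightarrow> y \<le> n"
    using Nat.ex_has_greatest_nat[of "\<lambda>y. \<exists>vs. P vs \<and> length vs = y" 2 "card V", OF _ bnd] P2 by fastforce
  obtain vs where vs: "P vs" "length vs = n" using n by blast
  have n2: "2 \<le> n" using nmax P2 by force
  have dist: "distinct vs" and sub: "set vs \<subseteq> V" and adj: "\<And>i. Suc i < length vs \<Longrightarrow> E (vs!i) (vs!Suc i)"
    using vs(1) unfolding P_def by auto
  have "vs!0 \<in> set vs" "vs!1 \<in> set vs" using n2 vs(2) by (intro nth_mem; simp)+
  then have l: "vs!0 \<in> V" "vs!1 \<in> V" using sub by auto
  have lp: "E (vs!0) (vs!1)" using adj[of 0] n2 vs(2) by auto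
  have "\<forall>q\<in>V. E (vs!0) q \<longrightarrow> q = vs!1"
  proof (intro ballI impI, rule ccontr)
    fix q assume q: "q \<in> V" "E (vs!0) q" "q \<noteq> vs!1"
    show False
    proof (cases "q \<in> set vs")
      case False
      have "P (q # vs)" unfolding P_def using False dist sub q adj sym[OF q(2)]
        by (auto simp: nth_Cons split: nat.splits)
      then show False using nmax vs(2) by fastforce
    next
      case True
      then obtain j where j: "j < length vs" "vs!j = q" by (auto simp: in_set_conv_nth)
      have "j \<noteq> 0" using j q irr[of "vs!0"] by (cases j) auto
      moreover have "j \<noteq> 1" using j q by auto
      ultimately have j2: "2 \<le> j" by auto
      let ?c = "take (Suc j) vs"
      have "ug_has_cycle V E"
        unfolding ug_has_cycle_def
      proof (intro exI[of _ ?c] conjI allI impI)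
        show "3 \<le> length ?c" using j j2 by auto
        show "distinct ?c" using dist by auto
        show "set ?c \<subseteq> V" using sub by (meson order_trans set_take_subset)
        fix i assume "Suc i < length ?c"
        then show "E (?c!i) (?c!Suc i)" using adj j by auto
      next
        have "last ?c = q" using j by (simp add: take_Suc_conv_app_nth)
        moreover have "hd ?c = vs!0" using j by (cases vs) auto
        ultimately show "E (last ?c) (hd ?c)" using q sym[OF q(2)] by auto
      qed
      then show False using nc by blast
    qed
  qed
  then show ?thesis using l lp by blast
qed

lemma tree_edges_aux:
  assumes "card V = Suc n" and fin: "finite V" and sym: "\<And>u v. E u v \<Longrightarrow> E v u" and irr: "\<And>u. \<not> E u u"
    and tr: "ug_tree V E"
  shows "card {(u,v). u \<in> V \<and> v \<in> V \<and> E u v} = 2 * n"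
  using assms(1) fin tr
proof (induction n arbitrary: V)
  case 0
  then obtain x where "V = {x}" by (auto simp: card_Suc_eq)
  then have h: "{(u,v). u \<in> V \<and> v \<in> V \<and> E u v} = {}" using irr by auto
  show ?case by (simp only: h) simp
next
  case (Suc n)
  have con: "ug_connected V E" and nc: "\<not> ug_has_cycle V E" using Suc.prems unfolding ug_tree_def by auto
  let ?R = "{(p, q). p \<in> V \<and> q \<in> V \<and> E p q}"
  obtain a b where ab: "a \<in> V" "b \<in> V" "a \<noteq> b" using Suc.prems(1)
    by (auto simp: card_Suc_eq)
  have "(a,b) \<in> ?R\<^sup>*" using con ab unfolding ug_connected_def by blast
  then obtain c where "(a,c) \<in> ?R" using ab(3) by (metis converse_rtranclE)
  then have "a \<in> V" "c \<in> V" "E a c" by auto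
  then obtain l p where l: "l \<in> V" "p \<in> V" "E l p" and leaf: "\<forall>q\<in>V. E l q \<longrightarrow> q = p"
    using tree_leaf[OF Suc.prems(2) sym irr nc] by blast
  have lp: "l \<noteq> p" using l irr by auto
  define V' where "V' = V - {l}"
  have cV': "card V' = Suc n" using Suc.prems l unfolding V'_def by simp
  have fV': "finite V'" using Suc.prems unfolding V'_def by simp
  let ?R' = "{(p, q). p \<in> V' \<and> q \<in> V' \<and> E p q}"
  have key: "(x,y) \<in> ?R\<^sup>* \<Longrightarrow> x \<noteq> l \<Longrightarrow> (y \<noteq> l \<longrightarrow> (x,y) \<in> ?R'\<^sup>*) \<and> (y = l \<longrightarrow> (x,p) \<in> ?R'\<^sup>*)" for x y
  proof (induction rule: rtrancl_induct)
    case base then show ?case by auto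
  next
    case (step y z)
    have yz: "y \<in> V" "z \<in> V" "E y z" using step by auto
    show ?case
    proof (cases "y = l")
      case True
      then have "z = p" using leaf yz by auto
      then show ?thesis using step True lp by auto
    next
      case False
      show ?thesis
      proof (cases "z = l")
        case True
        then have "y = p" using leaf yz sym[OF yz(3)] by auto
        then show ?thesis using step False True by auto
      next
        case False2: False
        have "(y,z) \<in> ?R'" using yz False False2 unfolding V'_def by auto
        then show ?thesis using step False False2 by (meson rtrancl_into_rtrancl)
      qed
    qed
  qed
  have con': "ug_connected V' E" unfolding ug_connected_def
  proof (intro conjI ballI)
    show "V' \<noteq> {}" using l lp unfolding V'_def by auto
    fix x y assume "x \<in> V'" "y \<in> V'"
    then show "(x,y) \<in> ?R'\<^sup>*" using key[of x y] con unfolding ug_connected_def V'_def by auto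
  qed
  have nc': "\<not> ug_has_cycle V' E" using nc unfolding ug_has_cycle_def V'_def by blast
  have IH: "card {(u,v). u \<in> V' \<and> v \<in> V' \<and> E u v} = 2 * n"
    using Suc.IH[OF cV' fV'] con' nc' unfolding ug_tree_def by blast
  have eq: "{(u,v). u \<in> V \<and> v \<in> V \<and> E u v} = {(u,v). u \<in> V' \<and> v \<in> V' \<and> E u v} \<union> {(l,p),(p,l)}"
  proof (intro equalityI subsetI)
    fix z assume "z \<in> {(u,v). u \<in> V \<and> v \<in> V \<and> E u v}"
    then obtain x y where z: "z = (x,y)" "x \<in> V" "y \<in> V" "E x y" by blast
    show "z \<in> {(u,v). u \<in> V' \<and> v \<in> V' \<and> E u v} \<union> {(l,p),(p,l)}"
    proof (cases "x = l \<or> y = l")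
      case True
      then show ?thesis
      proof
        assume "x = l" then have "y = p" using leaf z by blast
        then show ?thesis using z \<open>x = l\<close> by blast
      next
        assume "y = l" then have "x = p" using leaf z sym[OF z(4)] by blast
        then show ?thesis using z \<open>y = l\<close> by blast
      qed
    next
      case False then show ?thesis using z unfolding V'_def by blast
    qed
  next
    fix z assume "z \<in> {(u,v). u \<in> V' \<and> v \<in> V' \<and> E u v} \<union> {(l,p),(p,l)}"
    then show "z \<in> {(u,v). u \<in> V \<and> v \<in> V \<and> E u v}"
      using l sym[OF l(3)] unfolding V'_def by blast
  qed
  have fin': "finite {(u,v). u \<in> V' \<and> v \<in> V' \<and> E u v}"
    by (rule finite_subset[of _ "V' \<times> V'"]) (use fV' in auto)
  have "card ({(u,v). u \<in> V' \<and> v \<in> V' \<and> E u v} \<union> {(l,p),(p,l)}) = 2*n + 2"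
  proof -
    have d: "{(u,v). u \<in> V' \<and> v \<in> V' \<and> E u v} \<inter> {(l,p),(p,l)} = {}" unfolding V'_def by blast
    have "card {(l,p),(p,l)} = 2" using lp by simp
    then show ?thesis using card_Un_disjoint[OF fin' _ d] IH by simp
  qed
  then show ?case using eq by simp
qed



lemma map_upt_iff: "(w = map f [0..<length w]) \<longleftrightarrow> (\<forall>k<length w. w!k = f k)"
proof
  assume h: "w = map f [0..<length w]"
  show "\<forall>k<length w. w!k = f k"
  proof (intro allI impI)
    fix k assume k: "k < length w"
    have "map f [0..<length w] ! k = f k" using k by simp
    then show "w!k = f k" using h by metis
  qed
next
  assume "\<forall>k<length w. w!k = f k"
  then show "w = map f [0..<length w]" by (intro nth_equalityI) simp_all
qed
context
  fixes A :: "'a set" and X :: "(int \<Rightarrow> 'a) set"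
  assumes ss: "shift_space A X"
begin

lemma finA: "finite A" using ss unfolding shift_space_def by auto

lemma lang_iff: "w \<in> lang X \<longleftrightarrow> (\<exists>x\<in>X. \<exists>i::int. \<forall>k<length w. w!k = x (i + int k))"
  unfolding lang_def mem_Collect_eq map_upt_iff ..

lemma lang_A: "w \<in> lang X \<Longrightarrow> set w \<subseteq> A"
proof
  fix a assume "w \<in> lang X" "a \<in> set w"
  then obtain x i k where "x \<in> X" "k < length w" "w!k = x (i + int k)" "a = w!k"
    unfolding lang_iff in_set_conv_nth by blast
  then show "a \<in> A" using ss unfolding shift_space_def by auto
qed

lemma lang_Cons: "a # w \<in> lang X \<Longrightarrow> w \<in> lang X"
proof -
  assume "a # w \<in> lang X"
  then obtain x i where x: "x \<in> X" "\<forall>k<length (a#w). (a#w)!k = x (i + int k)" unfolding lang_iff by blast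
  have "\<forall>k<length w. w!k = x ((i+1) + int k)"
  proof (intro allI impI)
    fix k assume "k < length w"
    then have "Suc k < length (a#w)" by simp
    then have "(a#w)!Suc k = x (i + int (Suc k))" using x(2) by blast
    moreover have "i + int (Suc k) = (i+1) + int k" by simp
    ultimately show "w!k = x ((i+1) + int k)" by (simp add: add.assoc)
  qed
  then show ?thesis using x unfolding lang_iff by blast
qed

lemma lang_suffix: "suffix u w \<Longrightarrow> w \<in> lang X \<Longrightarrow> u \<in> lang X"
proof -
  have "\<forall>zs. zs @ u \<in> lang X \<longrightarrow> u \<in> lang X"
  proof
    fix zs show "zs @ u \<in> lang X \<longrightarrow> u \<in> lang X"
      by (induction zs) (auto dest: lang_Cons)
  qed
  then show "suffix u w \<Longrightarrow> w \<in> lang X \<Longrightarrow> u \<in> lang X" unfolding suffix_def by blast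
qed

lemma lang_snoc: "w \<in> lang X \<Longrightarrow> \<exists>b. w @ [b] \<in> lang X"
proof -
  assume "w \<in> lang X"
  then obtain x i where x: "x \<in> X" "\<forall>k<length w. w!k = x (i + int k)" unfolding lang_iff by blast
  have "\<forall>k<length (w @ [x (i + int (length w))]). (w @ [x (i + int (length w))])!k = x (i + int k)"
    using x by (auto simp: nth_append less_Suc_eq)
  then show ?thesis using x unfolding lang_iff by blast
qed

lemma fin_lang_n: "finite (lang_n X n)"
proof (rule finite_subset[of _ "{w. set w \<subseteq> A \<and> length w = n}"])
  show "lang_n X n \<subseteq> {w. set w \<subseteq> A \<and> length w = n}" unfolding lang_n_def using lang_A by blast
  show "finite {w. set w \<subseteq> A \<and> length w = n}" using finite_lists_length_eq[OF finA] by blast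
qed

lemma fin_right: "finite (right_ext X w)"
proof (rule finite_subset[of _ A])
  show "right_ext X w \<subseteq> A" unfolding right_ext_def
  proof
    fix b assume "b \<in> {b. w @ [b] \<in> lang X}"
    then have "set (w @ [b]) \<subseteq> A" using lang_A by blast
    then show "b \<in> A" by simp
  qed
qed (rule finA)

lemma fin_left: "finite (left_ext X w)"
proof (rule finite_subset[of _ A])
  show "left_ext X w \<subseteq> A" unfolding left_ext_def
  proof
    fix b assume "b \<in> {b. b # w \<in> lang X}"
    then have "set (b # w) \<subseteq> A" using lang_A by blast
    then show "b \<in> A" by simp
  qed
qed (rule finA)

lemma rho_nonneg: "w \<in> lang X \<Longrightarrow> 0 \<le> rho X w"
proof -
  assume "w \<in> lang X"
  then obtain b where "b \<in> right_ext X w" using lang_snoc unfolding right_ext_def by blast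
  then have "card (right_ext X w) \<noteq> 0" using fin_right by auto
  then show ?thesis unfolding rho_def by simp
qed

lemma one_step:
  assumes tr: "ug_tree (ext_vertices X w) (ext_adj X w)"
  shows "rho X w = (\<Sum>a\<in>left_ext X w. rho X (a # w))"
proof -
  define L where "L = left_ext X w"
  define R where "R = right_ext X w"
  define V where "V = ext_vertices X w"
  have fL: "finite L" unfolding L_def by (rule fin_left)
  have fR: "finite R" unfolding R_def by (rule fin_right)
  have V: "V = Inl ` L \<union> Inr ` R" unfolding V_def ext_vertices_def L_def R_def by simp
  have fV: "finite V" using V fL fR by simp
  have cV: "card V = card L + card R"
  proof -
    have d: "(Inl ` L :: ('a + 'a) set) \<inter> Inr ` R = {}" by auto
    have "card V = card (Inl ` L :: ('a + 'a) set) + card (Inr ` R :: ('a + 'a) set)"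
      using card_Un_disjoint[OF _ _ d] fL fR V by simp
    then show ?thesis by (simp add: card_image)
  qed
  have "V \<noteq> {}" using tr unfolding V_def ug_tree_def ug_connected_def by blast
  then obtain n where n: "card V = Suc n" using fV by (metis card_0_eq not0_implies_Suc)
  have sym: "\<And>u v. ext_adj X w u v \<Longrightarrow> ext_adj X w v u" unfolding ext_adj_def by blast
  have irr: "\<And>u. \<not> ext_adj X w u u" unfolding ext_adj_def by blast
  have cP: "card {(u,v). u \<in> V \<and> v \<in> V \<and> ext_adj X w u v} = 2 * n"
    using tree_edges_aux[where E="ext_adj X w", OF n fV sym irr] tr V_def by blast
  define Ed where "Ed = (SIGMA a:L. right_ext X (a # w))"
  have fEd: "finite Ed" unfolding Ed_def using fL fin_right by auto
  have P: "{(u,v). u \<in> V \<and> v \<in> V \<and> ext_adj X w u v}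
      = (\<lambda>(a,b). (Inl a, Inr b)) ` Ed \<union> (\<lambda>(a,b). (Inr b, Inl a)) ` Ed"
  proof (intro equalityI subsetI)
    fix z assume "z \<in> {(u,v). u \<in> V \<and> v \<in> V \<and> ext_adj X w u v}"
    then obtain u v a b where z: "z = (u,v)" "u \<in> V" "v \<in> V"
      and ab: "(u = Inl a \<and> v = Inr b) \<or> (u = Inr b \<and> v = Inl a)" "a # w @ [b] \<in> lang X"
      unfolding ext_adj_def by blast
    have bR: "b \<in> right_ext X (a # w)" using ab(2) unfolding right_ext_def by simp
    from ab(1) show "z \<in> (\<lambda>(a,b). (Inl a, Inr b)) ` Ed \<union> (\<lambda>(a,b). (Inr b, Inl a)) ` Ed"
    proof
      assume h: "u = Inl a \<and> v = Inr b"
      then have "a \<in> L" using z(2) V by auto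
      then have "(a,b) \<in> Ed" using bR unfolding Ed_def by blast
      then show ?thesis using z h by force
    next
      assume h: "u = Inr b \<and> v = Inl a"
      then have "a \<in> L" using z(3) V by auto
      then have "(a,b) \<in> Ed" using bR unfolding Ed_def by blast
      then show ?thesis using z h by force
    qed
  next
    fix z assume "z \<in> (\<lambda>(a,b). (Inl a, Inr b)) ` Ed \<union> (\<lambda>(a,b). (Inr b, Inl a)) ` Ed"
    then obtain a b where ab: "(a,b) \<in> Ed" "z = (Inl a, Inr b) \<or> z = (Inr b, Inl a)" by auto
    then have aL: "a \<in> L" and h: "a # w @ [b] \<in> lang X" unfolding Ed_def right_ext_def by auto
    have "w @ [b] \<in> lang X" using lang_Cons[OF h] .
    then have bR: "b \<in> R" unfolding R_def right_ext_def by simp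
    have adj1: "ext_adj X w (Inl a) (Inr b)" "ext_adj X w (Inr b) (Inl a)" using h unfolding ext_adj_def by blast+
    have "Inl a \<in> V" "Inr b \<in> V" using aL bR V by auto
    then show "z \<in> {(u,v). u \<in> V \<and> v \<in> V \<and> ext_adj X w u v}" using ab(2) adj1 by auto
  qed
  have "card {(u,v). u \<in> V \<and> v \<in> V \<and> ext_adj X w u v} = card Ed + card Ed"
    unfolding P
  proof -
    have d: "(\<lambda>(a,b). (Inl a, Inr b)) ` Ed \<inter> (\<lambda>(a,b). (Inr b, Inl a)) ` Ed = {}" by auto
    have i1: "inj_on (\<lambda>(a,b). (Inl a :: 'a + 'a, Inr b :: 'a + 'a)) Ed" by (auto simp: inj_on_def)
    have i2: "inj_on (\<lambda>(a,b). (Inr b :: 'a + 'a, Inl a :: 'a + 'a)) Ed" by (auto simp: inj_on_def)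
    show "card ((\<lambda>(a,b). (Inl a, Inr b)) ` Ed \<union> (\<lambda>(a,b). (Inr b, Inl a)) ` Ed) = card Ed + card Ed"
      using card_Un_disjoint[OF _ _ d] fEd card_image[OF i1] card_image[OF i2] by simp
  qed
  then have cEd: "card Ed = n" using cP by simp
  have cEd2: "card Ed = (\<Sum>a\<in>L. card (right_ext X (a # w)))"
    unfolding Ed_def using fL fin_right by simp
  have "(\<Sum>a\<in>L. rho X (a # w)) = (\<Sum>a\<in>L. int (card (right_ext X (a # w))) - 1)"
    unfolding rho_def by simp
  also have "\<dots> = int (card Ed) - int (card L)"
    by (simp add: sum_subtractf cEd2)
  also have "\<dots> = int (card R) - 1" using cEd n cV by simp
  finally show ?thesis unfolding rho_def R_def L_def by simp
qed


lemma one_step':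
  assumes ed: "eventually_dendric X m" and w: "w \<in> lang X" "m \<le> length w"
  shows "rho X w = (\<Sum>a\<in>left_ext X w. rho X (a # w))"
  using one_step ed w unfolding eventually_dendric_def lang_ge_def by blast

lemma ext_sum:
  assumes ed: "eventually_dendric X m" and u: "u \<in> lang X" "m \<le> length u"
  shows "rho X u = (\<Sum>w\<in>{w\<in>lang_n X (length u + k). suffix u w}. rho X w)"
proof (induction k)
  case 0
  have "{w\<in>lang_n X (length u + 0). suffix u w} = {u}" using u unfolding lang_n_def suffix_def by auto
  then show ?case by simp
next
  case (Suc k)
  let ?S = "{w\<in>lang_n X (length u + k). suffix u w}"
  let ?S' = "{w\<in>lang_n X (length u + Suc k). suffix u w}"
  let ?Sg = "SIGMA w:?S. left_ext X w"
  have fS: "finite ?S" by (rule finite_subset[OF _ fin_lang_n]) auto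
  have eq: "?S' = (\<lambda>(w,a). a # w) ` ?Sg"
  proof (intro equalityI subsetI)
    fix z assume "z \<in> ?S'"
    then have z: "z \<in> lang X" "length z = Suc (length u + k)" "suffix u z" unfolding lang_n_def by auto
    then obtain a w where zw: "z = a # w" by (cases z) auto
    have "w \<in> lang X" using z zw lang_Cons by blast
    moreover have "suffix u w" using z(2,3) zw by (auto simp: suffix_Cons)
    moreover have "a \<in> left_ext X w" using z zw unfolding left_ext_def by simp
    moreover have "length w = length u + k" using z zw by simp
    ultimately have "(w,a) \<in> ?Sg" unfolding lang_n_def by blast
    then show "z \<in> (\<lambda>(w,a). a # w) ` ?Sg" using zw by force
  next
    fix z assume "z \<in> (\<lambda>(w,a). a # w) ` ?Sg"
    then obtain a w where "w \<in> ?S" "a \<in> left_ext X w" "z = a # w" by auto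
    then show "z \<in> ?S'" unfolding lang_n_def left_ext_def by (auto intro: suffix_ConsI)
  qed
  have inj: "inj_on (\<lambda>(w,a). a # w) ?Sg" by (auto simp: inj_on_def)
  have "(\<Sum>w\<in>?S'. rho X w) = (\<Sum>(w,a)\<in>?Sg. rho X (a # w))"
    unfolding eq by (subst sum.reindex[OF inj]) (simp add: case_prod_unfold)
  also have "\<dots> = (\<Sum>w\<in>?S. \<Sum>a\<in>left_ext X w. rho X (a # w))"
    by (rule sum.Sigma[symmetric]) (use fS fin_left in auto)
  also have "\<dots> = (\<Sum>w\<in>?S. rho X w)"
  proof (rule sum.cong)
    fix w assume "w \<in> ?S"
    then have "w \<in> lang X" "m \<le> length w" using u unfolding lang_n_def by auto
    then show "(\<Sum>a\<in>left_ext X w. rho X (a # w)) = rho X w" using one_step'[OF ed] by simp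
  qed simp
  finally show ?case using Suc.IH by simp
qed

lemma code_sum:
  assumes ed: "eventually_dendric X m" and fV: "finite V" and sc: "suffix_code V"
    and VL: "V \<subseteq> lang_ge X m" and N: "\<forall>v\<in>V. length v \<le> N"
  shows "(\<Sum>v\<in>V. rho X v) = (\<Sum>w\<in>{w\<in>lang_n X N. \<exists>v\<in>V. suffix v w}. rho X w)"
proof -
  have set: "{w\<in>lang_n X N. \<exists>v\<in>V. suffix v w} = (\<Union>v\<in>V. {w\<in>lang_n X N. suffix v w})" by auto
  have disj: "\<forall>i\<in>V. \<forall>j\<in>V. i \<noteq> j \<longrightarrow> {w\<in>lang_n X N. suffix i w} \<inter> {w\<in>lang_n X N. suffix j w} = {}"
  proof (intro ballI impI)
    fix i j assume ij: "i \<in> V" "j \<in> V" "i \<noteq> j"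
    show "{w\<in>lang_n X N. suffix i w} \<inter> {w\<in>lang_n X N. suffix j w} = {}"
    proof (rule ccontr)
      assume "{w\<in>lang_n X N. suffix i w} \<inter> {w\<in>lang_n X N. suffix j w} \<noteq> {}"
      then obtain w where "suffix i w" "suffix j w" by blast
      then have "suffix i j \<or> suffix j i" by (rule suffix_same_cases)
      then have "strict_suffix i j \<or> strict_suffix j i" using ij(3) unfolding strict_suffix_def by auto
      then show False using sc ij unfolding suffix_code_def by blast
    qed
  qed
  have "(\<Sum>w\<in>{w\<in>lang_n X N. \<exists>v\<in>V. suffix v w}. rho X w)
      = (\<Sum>v\<in>V. \<Sum>w\<in>{w\<in>lang_n X N. suffix v w}. rho X w)"
    unfolding set by (rule sum.UNION_disjoint[OF fV _ disj]) (auto intro: finite_subset[OF _ fin_lang_n])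
  also have "\<dots> = (\<Sum>v\<in>V. rho X v)"
  proof (rule sum.cong)
    fix v assume v: "v \<in> V"
    then have "v \<in> lang X" "m \<le> length v" "length v \<le> N" using VL N unfolding lang_ge_def by auto
    then show "(\<Sum>w\<in>{w\<in>lang_n X N. suffix v w}. rho X w) = rho X v"
      using ext_sum[OF ed, of v "N - length v"] by simp
  qed simp
  finally show ?thesis by simp
qed

end


lemma strict_suffix_len: "strict_suffix u w \<Longrightarrow> length u < length w"
  unfolding strict_suffix_def suffix_def by auto

theorem mainTheorem11:
  fixes A :: "'a set" and X :: "(int \<Rightarrow> 'a) set" and m :: nat
  assumes "shift_space A X"
    and "eventually_dendric X m"
  shows "(\<forall>U. suffix_code U \<and> U \<subseteq> lang X \<longrightarrow> finite {u \<in> U. rho X u \<noteq> 0})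
    \<and> (\<forall>U. finite U \<and> X_maximal_suffix_code X U \<and> U \<subseteq> lang_ge X m \<longrightarrow>
           (\<Sum>u\<in>U. rho X u) = (\<Sum>w\<in>lang_n X m. rho X w))"
proof -
  note ss = assms(1) and ed = assms(2)
  define S where "S = (\<Sum>w\<in>lang_n X m. rho X w)"
  have Lm: "(\<Sum>w\<in>lang_n X N. rho X w) = S" if N: "m \<le> N" for N
  proof -
    have sc: "suffix_code (lang_n X m)" unfolding suffix_code_def lang_n_def
      using strict_suffix_len by fastforce
    have sub: "lang_n X m \<subseteq> lang_ge X m" unfolding lang_n_def lang_ge_def by auto
    have "S = (\<Sum>w\<in>{w\<in>lang_n X N. \<exists>v\<in>lang_n X m. suffix v w}. rho X w)"
      unfolding S_def using code_sum[OF ss ed fin_lang_n[OF ss] sc sub, of N] N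
      unfolding lang_n_def by auto
    also have "{w\<in>lang_n X N. \<exists>v\<in>lang_n X m. suffix v w} = lang_n X N"
    proof (intro equalityI subsetI)
      fix w assume w: "w \<in> lang_n X N"
      have "suffix (drop (N - m) w) w" by (rule suffix_drop)
      moreover have "drop (N - m) w \<in> lang_n X m"
        using w N lang_suffix[OF ss suffix_drop] unfolding lang_n_def by auto
      ultimately show "w \<in> {w\<in>lang_n X N. \<exists>v\<in>lang_n X m. suffix v w}" using w by blast
    qed auto
    finally show ?thesis by simp
  qed
  have S0: "0 \<le> S" unfolding S_def by (rule sum_nonneg) (use rho_nonneg[OF ss] in \<open>auto simp: lang_n_def\<close>)
  have part1: "finite {u \<in> U. rho X u \<noteq> 0}" if sc: "suffix_code U" and UL: "U \<subseteq> lang X" for U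
  proof -
    define F where "F = {u\<in>U. m \<le> length u \<and> rho X u \<noteq> 0}"
    have sub: "{u \<in> U. rho X u \<noteq> 0} \<subseteq> {w. set w \<subseteq> A \<and> length w \<le> m} \<union> F"
      using UL lang_A[OF ss] unfolding F_def by fastforce
    have f1: "finite {w. set w \<subseteq> A \<and> length w \<le> m}" by (rule finite_lists_length_le[OF finA[OF ss]])
    have "finite F"
    proof (rule ccontr)
      assume "infinite F"
      then obtain G where G: "finite G" "card G = Suc (nat S)" "G \<subseteq> F"
        using infinite_arbitrarily_large by blast
      have scG: "suffix_code G" using sc G(3) unfolding suffix_code_def F_def by blast
      have GL: "G \<subseteq> lang_ge X m" using G(3) UL unfolding F_def lang_ge_def by auto
      define N where "N = Max (insert m (length ` G))"
      have N: "\<forall>v\<in>G. length v \<le> N" "m \<le> N" unfolding N_def using G(1) by auto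
      have "(\<Sum>v\<in>G. rho X v) = (\<Sum>w\<in>{w\<in>lang_n X N. \<exists>v\<in>G. suffix v w}. rho X w)"
        by (rule code_sum[OF ss ed G(1) scG GL N(1)])
      also have "\<dots> \<le> (\<Sum>w\<in>lang_n X N. rho X w)"
        by (rule sum_mono2[OF fin_lang_n[OF ss]]) (auto simp: lang_n_def intro: rho_nonneg[OF ss])
      also have "\<dots> = S" using Lm N(2) by simp
      finally have le: "(\<Sum>v\<in>G. rho X v) \<le> S" .
      have "(\<Sum>v\<in>G. (1::int)) \<le> (\<Sum>v\<in>G. rho X v)"
      proof (rule sum_mono)
        fix v assume "v \<in> G"
        then have "rho X v \<noteq> 0" "0 \<le> rho X v" using G(3) UL rho_nonneg[OF ss] unfolding F_def by auto
        then show "1 \<le> rho X v" by simp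
      qed
      then have "int (card G) \<le> S" using le by simp
      then show False using G(2) S0 by simp
    qed
    then show ?thesis using f1 sub by (meson finite_Un finite_subset)
  qed
  have part2: "(\<Sum>u\<in>U. rho X u) = S"
    if fU: "finite U" and mx: "X_maximal_suffix_code X U" and UL: "U \<subseteq> lang_ge X m" for U
  proof -
    have sc: "suffix_code U" and UL': "U \<subseteq> lang X"
      and nomax: "\<not> (\<exists>V. suffix_code V \<and> V \<subseteq> lang X \<and> U \<subset> V)"
      using mx unfolding X_maximal_suffix_code_def by auto
    define N where "N = Max (insert m (length ` U))"
    have N: "\<forall>v\<in>U. length v \<le> N" "m \<le> N" unfolding N_def using fU by auto
    have "{w\<in>lang_n X N. \<exists>v\<in>U. suffix v w} = lang_n X N"
    proof (intro equalityI subsetI)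
      fix w assume w: "w \<in> lang_n X N"
      show "w \<in> {w\<in>lang_n X N. \<exists>v\<in>U. suffix v w}"
      proof (rule ccontr)
        assume "w \<notin> {w\<in>lang_n X N. \<exists>v\<in>U. suffix v w}"
        then have ns: "\<forall>v\<in>U. \<not> suffix v w" using w by blast
        have wU: "w \<notin> U" using ns by auto
        have lw: "length w = N" "w \<in> lang X" using w unfolding lang_n_def by auto
        have "suffix_code (insert w U)" unfolding suffix_code_def
        proof (intro ballI)
          fix u v assume u: "u \<in> insert w U" and v: "v \<in> insert w U"
          show "\<not> strict_suffix u v"
          proof
            assume st: "strict_suffix u v"
            show False
            proof (cases "u = w")
              case True
              then have "v \<in> U" using st v by auto
              then show False using strict_suffix_len[OF st] True N(1) lw by fastforce
            next
              case False
              then have uU: "u \<in> U" using u by auto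
              show False
              proof (cases "v = w")
                case True then show False using ns uU st unfolding strict_suffix_def by blast
              next
                case False then show False using sc uU v st unfolding suffix_code_def by blast
              qed
            qed
          qed
        qed
        moreover have "insert w U \<subseteq> lang X" using UL' lw by auto
        moreover have "U \<subset> insert w U" using wU by auto
        ultimately show False using nomax by blast
      qed
    qed auto
    then show ?thesis using code_sum[OF ss ed fU sc UL N(1)] Lm[OF N(2)] by simp
  qed
  show ?thesis using part1 part2 unfolding S_def by blast
qed

end
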